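(* Let $(X,d)$ be a metric space with $|X|\ge 2$ and let $\tilde x$ be a $d$-statistically convergent sequence of points of $X$. Let $\tilde x'$ be a subsequence of $\tilde x$ with the following property: whenever $\tilde y$ is a sequence in $X$ statistically equivalent to $\tilde x$ and $\tilde y'$ is a subsequence of $\tilde y$ with $K_{\tilde y'}=K_{\tilde x'}$, the subsequence $\tilde y'$ is $d$-statistically convergent. Then $\limsup_{n\to\infty}\frac{|K_{\tilde x'}(n)|}{n}>0$.
   Context: For a subsequence $\tilde z'=(z_{n(k)})$ of a sequence $(z_n)$ (with $(n(k))$ infinite and strictly increasing), $K_{\tilde z'}=\{n(k):k\in\mathbb N\}$ and $K_{\tilde z'}(n)=\{m\in K_{\tilde z'}:m\le n\}$. A sequence $(z_k)$ is $d$-statistically convergent if there is $a\in X$ with $\lim_{n\to\infty}\frac1n|\{k\le n: d(z_k,a)\ge\epsilon\}|=0$ for all $\epsilon>0$; subsequences are regarded as sequences indexed by $k$. A set $M\subseteq\mathbb N$ is statistical dense if $\lim_{n\to\infty}|\{m\in M:m\le n\}|/n=1$; sequences $(x_n),(y_n)$ are statistically equivalent if $x_n=y_n$ for all $n$ in some statistical dense $M$. *)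

theory Defs
  imports Complex_Main "HOL-Library.Extended_Real"
begin

(* Sequences are indexed by nat = {0,1,2,...}; "|{k <= n : ...}| / n" is rendered
   as "card {k. k < n \<and> ...} / n" (an index shift by one, irrelevant for limits). *)

definition d_stat_convergent :: "(nat \<Rightarrow> 'a::metric_space) \<Rightarrow> bool" where
  "d_stat_convergent z \<longleftrightarrow>
     (\<exists>a. \<forall>\<epsilon>>0. (\<lambda>n. real (card {k. k < n \<and> dist (z k) a \<ge> \<epsilon>}) / real n) \<longlonglongrightarrow> 0)"

definition stat_dense :: "nat set \<Rightarrow> bool" where
  "stat_dense M \<longleftrightarrow> (\<lambda>n. real (card {m\<in>M. m < n}) / real n) \<longlonglongrightarrow> 1"

definition stat_equivalent :: "(nat \<Rightarrow> 'a) \<Rightarrow> (nat \<Rightarrow> 'a) \<Rightarrow> bool" where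
  "stat_equivalent x y \<longleftrightarrow> (\<exists>M. stat_dense M \<and> (\<forall>n\<in>M. x n = y n))"

(* K_{x'} for the subsequence x \<circ> r is range r; K_{x'}(n) = {m \<in> range r. m \<le> n} *)
definition Kcount :: "(nat \<Rightarrow> nat) \<Rightarrow> nat \<Rightarrow> nat" where
  "Kcount r n = card {m \<in> range r. m \<le> n}"

end

theory Submission
  imports Defs
begin

lemma card_par_ge:
  fixes n :: nat and j :: nat
  assumes "j < 2"
  shows "n div 2 \<le> card {k. k < n \<and> k mod 2 = j}"
proof -
  have "(\<lambda>i. 2*i + j) ` {..<n div 2} \<subseteq> {k. k < n \<and> k mod 2 = j}"
    using assms by auto
  moreover have "inj_on (\<lambda>i. 2*i + j) {..<n div 2}" by (auto simp: inj_on_def)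
  ultimately have "card ((\<lambda>i. 2*i + j) ` {..<n div 2}) \<le> card {k. k < n \<and> k mod 2 = j}"
    by (intro card_mono) auto
  moreover have "card ((\<lambda>i. 2*i + j) ` {..<n div 2}) = n div 2"
    using \<open>inj_on _ _\<close> by (simp add: card_image)
  ultimately show ?thesis by simp
qed

lemma alt_not_conv:
  fixes a b :: "'a::metric_space"
  assumes "a \<noteq> b"
  shows "\<not> d_stat_convergent (\<lambda>k. if even k then a else b)"
proof
  assume "d_stat_convergent (\<lambda>k. if even k then a else b)"
  then obtain c where c: "\<And>e. e > 0 \<Longrightarrow> (\<lambda>n. real (card {k. k < n \<and> dist (if even k then a else b) c \<ge> e}) / real n) \<longlonglongrightarrow> 0"
    unfolding d_stat_convergent_def by blast
  define e where "e = dist a b / 2"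
  have e: "e > 0" using assms by (simp add: e_def)
  have tri: "dist a c \<ge> e \<or> dist b c \<ge> e"
    using dist_triangle3[of a b c] unfolding e_def by (auto simp: dist_commute)
  obtain j :: nat where j: "j < 2" and jsub: "\<And>n. {k. k < n \<and> k mod 2 = j} \<subseteq> {k. k < n \<and> dist (if even k then a else b) c \<ge> e}"
  proof (cases "dist a c \<ge> e")
    case True
    show ?thesis by (rule that[of 0]) (use True in \<open>auto simp: even_iff_mod_2_eq_zero\<close>)
  next
    case False
    then have "dist b c \<ge> e" using tri by auto
    then show ?thesis by (intro that[of 1]) (auto simp: odd_iff_mod_2_eq_one)
  qed
  have lim: "(\<lambda>n. real (card {k. k < n \<and> dist (if even k then a else b) c \<ge> e}) / real n) \<longlonglongrightarrow> 0"
    using c e by blast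
  have "eventually (\<lambda>n. real (card {k. k < n \<and> dist (if even k then a else b) c \<ge> e}) / real n < 1/3) sequentially"
    by (rule order_tendstoD(2)[OF lim]) simp
  moreover have "eventually (\<lambda>n. n \<ge> (2::nat)) sequentially" by (rule eventually_ge_at_top)
  ultimately have "eventually (\<lambda>n. real (card {k. k < n \<and> dist (if even k then a else b) c \<ge> e}) / real n < 1/3 \<and> n \<ge> 2) sequentially"
    by (rule eventually_conj)
  then obtain N where N: "\<And>n. n \<ge> N \<Longrightarrow> real (card {k. k < n \<and> dist (if even k then a else b) c \<ge> e}) / real n < 1/3 \<and> n \<ge> 2"
    unfolding eventually_sequentially by blast
  define n where "n = N"
  have n1: "real (card {k. k < n \<and> dist (if even k then a else b) c \<ge> e}) / real n < 1/3"
    and n2: "n \<ge> 2" using N[of N] by (simp_all add: n_def)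
  have fin: "finite {k. k < n \<and> dist (if even k then a else b) c \<ge> e}" by simp
  have "n div 2 \<le> card {k. k < n \<and> dist (if even k then a else b) c \<ge> e}"
    using card_par_ge[OF j, of n] card_mono[OF fin jsub[of n]] by (rule le_trans)
  then have "real (n div 2) / real n \<le> real (card {k. k < n \<and> dist (if even k then a else b) c \<ge> e}) / real n"
    by (simp add: divide_right_mono)
  moreover have "real (n div 2) \<ge> real n / 3"
  proof -
    have "3 * (n div 2) \<ge> n" using n2 by presburger
    then show ?thesis by linarith
  qed
  then have "real (n div 2) / real n \<ge> 1/3" using n2 by (simp add: field_simps)
  ultimately show False using n1 by linarith
qed

theorem theorem7:
  fixes x :: "nat \<Rightarrow> 'a::metric_space" and r :: "nat \<Rightarrow> nat"
  assumes two: "\<exists>a b::'a. a \<noteq> b"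
    and conv: "d_stat_convergent x"
    and sub: "strict_mono r"
    and hyp: "\<And>y r'. stat_equivalent x y \<Longrightarrow> strict_mono r' \<Longrightarrow> range r' = range r
                 \<Longrightarrow> d_stat_convergent (y \<circ> r')"
  shows "limsup (\<lambda>n. ereal (real (Kcount r n) / real n)) > 0"
proof (rule ccontr)
  assume "\<not> ?thesis"
  then have ls: "limsup (\<lambda>n. ereal (real (Kcount r n) / real n)) \<le> 0" by simp
  have li: "0 \<le> liminf (\<lambda>n. ereal (real (Kcount r n) / real n))"
    by (rule Liminf_bounded) auto
  have "liminf (\<lambda>n. ereal (real (Kcount r n) / real n)) \<le> limsup (\<lambda>n. ereal (real (Kcount r n) / real n))"
    by (rule Liminf_le_Limsup) simp
  then have eqs: "liminf (\<lambda>n. ereal (real (Kcount r n) / real n)) = 0"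
      "limsup (\<lambda>n. ereal (real (Kcount r n) / real n)) = 0"
    using ls li by auto
  have L: "((\<lambda>n. ereal (real (Kcount r n) / real n)) \<longlongrightarrow> (0::ereal)) sequentially"
    by (subst tendsto_iff_Liminf_eq_Limsup) (auto simp: eqs)
  have K0: "(\<lambda>n. real (Kcount r n) / real n) \<longlonglongrightarrow> 0"
    using L unfolding zero_ereal_def lim_ereal .
  define M where "M = - range r"
  have cardK: "card {m \<in> M. m < n} = n - card {m \<in> range r. m < n}" for n
  proof -
    have "{m \<in> M. m < n} = {..<n} - {m \<in> range r. m < n}" by (auto simp: M_def)
    then show ?thesis using card_Diff_subset[of "{m \<in> range r. m < n}" "{..<n}"] by auto
  qed
  have le: "card {m \<in> range r. m < n} \<le> Kcount r n" for n
    unfolding Kcount_def by (rule card_mono) auto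
  have le2: "card {m \<in> range r. m < n} \<le> n" for n
    by (metis (no_types, lifting) card_lessThan card_mono finite_lessThan lessThan_iff mem_Collect_eq subsetI)
  have "stat_dense M"
    unfolding stat_dense_def
  proof -
    have A: "(\<lambda>n. real (card {m \<in> range r. m < n}) / real n) \<longlonglongrightarrow> 0"
    proof (rule tendsto_sandwich[OF _ _ tendsto_const K0])
      show "\<forall>\<^sub>F n in sequentially. 0 \<le> real (card {m \<in> range r. m < n}) / real n" by simp
      show "\<forall>\<^sub>F n in sequentially. real (card {m \<in> range r. m < n}) / real n \<le> real (Kcount r n) / real n"
        using le by (intro always_eventually allI divide_right_mono) auto
    qed
    have "(\<lambda>n. 1 - real (card {m \<in> range r. m < n}) / real n) \<longlonglongrightarrow> 1 - 0"
      by (intro tendsto_diff tendsto_const A)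
    then have B: "(\<lambda>n. 1 - real (card {m \<in> range r. m < n}) / real n) \<longlonglongrightarrow> 1" by simp
    have "eventually (\<lambda>n. 1 - real (card {m \<in> range r. m < n}) / real n = real (card {m \<in> M. m < n}) / real n) sequentially"
      using eventually_ge_at_top[of "1::nat"]
    proof (rule eventually_mono)
      fix n :: nat assume "n \<ge> 1"
      then show "1 - real (card {m \<in> range r. m < n}) / real n = real (card {m \<in> M. m < n}) / real n"
        using le2[of n] by (simp add: cardK of_nat_diff field_simps)
    qed
    then show "(\<lambda>n. real (card {m \<in> M. m < n}) / real n) \<longlonglongrightarrow> 1"
      by (rule Lim_transform_eventually[OF B])
  qed
  obtain a b :: 'a where ab: "a \<noteq> b" using two by blast
  define y where "y n = (if n \<in> range r then (if even (inv r n) then a else b) else x n)" for n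
  have "\<forall>n\<in>M. x n = y n" by (simp add: M_def y_def)
  then have "stat_equivalent x y"
    unfolding stat_equivalent_def using \<open>stat_dense M\<close> by blast
  then have "d_stat_convergent (y \<circ> r)" by (rule hyp[OF _ sub refl])
  moreover have "y \<circ> r = (\<lambda>k. if even k then a else b)"
  proof
    fix k
    have "inv r (r k) = k" using strict_mono_imp_inj_on[OF sub] by (simp add: inv_f_f)
    then show "(y \<circ> r) k = (if even k then a else b)" by (simp add: y_def)
  qed
  ultimately show False using alt_not_conv[OF ab] by simp
qed

end
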